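(* (Quotient rule.) Let $n\in\mathbb{N}$ (with $0\in\mathbb{N}$) and let $u$ and $v$ be $n$ times differentiable functions of $x$. At every point where $v\neq 0$, \[ \frac{d^n}{dx^n}\left(\frac{u}{v}\right)=n!\sum_{\ell=0}^{n}\frac{u^{(n-\ell)}}{(n-\ell)!}\sum_{\sum_i i y_{k,i}=\ell}\binom{\sum_i y_{k,i}}{y_{k,1},\ldots,y_{k,\ell}}\frac{(-1)^{\sum_i y_{k,i}}}{v^{\sum_i y_{k,i}+1}}\prod_{i=1}^{\ell}\left[\frac{v^{(i)}}{i!}\right]^{y_{k,i}}. \]
   Context: For each $\ell$, the inner sum runs over all partitions of $\ell$, each represented as a tuple $(y_{k,1},\ldots,y_{k,\ell})$ of non-negative integers with $\sum_{i=1}^{\ell} i\,y_{k,i}=\ell$; sums $\sum_i$ run over $i=1,\ldots,\ell$. For $\ell=0$ the only partition is the zero partition and the inner sum equals $1/v$. $f^{(i)}$ denotes the $i$-th derivative with respect to $x$, and $\binom{N}{a_1,\ldots,a_m}=\frac{N!}{a_1!\cdots a_m!}$ is the multinomial coefficient. *)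

theory Defs
  imports "HOL-Analysis.Analysis"
begin

text \<open>Partitions of l, as multiplicity tuples (y_1,...,y_l) with sum_i i*y_i = l;
  entries outside {1..l} are forced to be 0.\<close>
definition partitions_tuples :: "nat \<Rightarrow> (nat \<Rightarrow> nat) set" where
  "partitions_tuples l = {y. (\<forall>i. i \<notin> {1..l} \<longrightarrow> y i = 0) \<and> (\<Sum>i=1..l. i * y i) = l}"

definition multinomial_coeff :: "nat \<Rightarrow> (nat \<Rightarrow> nat) \<Rightarrow> nat \<Rightarrow> real" where
  "multinomial_coeff N a m = fact N / (\<Prod>i=1..m. fact (a i))"

end

theory Submission
  imports Defs "HOL-Combinatorics.Multiset_Permutations"
begin


lemma leibniz_sum:
  fixes a b :: "nat \<Rightarrow> real"
  shows "(\<Sum>i=0..k. real (k choose i) * (a (Suc i) * b (k - i) + a i * b (Suc (k - i)))) =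
         (\<Sum>i=0..Suc k. real (Suc k choose i) * a i * b (Suc k - i))"
proof -
  have "(\<Sum>i=0..Suc k. real (Suc k choose i) * a i * b (Suc k - i)) =
        a 0 * b (Suc k) + (\<Sum>i=0..k. real (Suc k choose Suc i) * a (Suc i) * b (k - i))"
    by (subst sum.atLeast0_atMost_Suc_shift) simp
  also have "(\<Sum>i=0..k. real (Suc k choose Suc i) * a (Suc i) * b (k - i)) =
     (\<Sum>i=0..k. real (k choose i) * a (Suc i) * b (k - i)) + (\<Sum>i=0..k. real (k choose Suc i) * a (Suc i) * b (k - i))"
    by (simp add: sum.distrib algebra_simps)
  also have "(\<Sum>i=0..k. real (k choose Suc i) * a (Suc i) * b (k - i)) =
     (\<Sum>i=0..Suc k. real (k choose i) * a i * b (Suc k - i)) - a 0 * b (Suc k)"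
  proof -
    have "(\<Sum>i=0..Suc k. real (k choose i) * a i * b (Suc k - i)) = a 0 * b (Suc k) +
       (\<Sum>i=0..k. real (k choose Suc i) * a (Suc i) * b (k - i))"
      by (subst sum.atLeast0_atMost_Suc_shift) simp
    then show ?thesis by linarith
  qed
  also have "(\<Sum>i=0..Suc k. real (k choose i) * a i * b (Suc k - i)) = (\<Sum>i=0..k. real (k choose i) * a i * b (Suc k - i))"
    by (simp)
  finally show ?thesis
    by (simp add: sum.distrib algebra_simps Suc_diff_le)
qed

lemma leibniz_step:
  fixes f g :: "real \<Rightarrow> real"
  assumes T: "open T" and df: "\<And>k y. k < m \<Longrightarrow> y \<in> T \<Longrightarrow> (deriv^^k) f differentiable (at y)"
    and dg: "\<And>k y. k < m \<Longrightarrow> y \<in> T \<Longrightarrow> (deriv^^k) g differentiable (at y)"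
    and k: "k < m" and y: "y \<in> T"
    and IH: "\<And>z. z \<in> T \<Longrightarrow> (deriv ^^ k) (\<lambda>w. f w * g w) z =
       (\<Sum>i=0..k. real (k choose i) * (deriv^^i) f z * (deriv^^(k-i)) g z)"
  shows "((deriv ^^ k) (\<lambda>w. f w * g w) has_field_derivative
       (\<Sum>i=0..Suc k. real (Suc k choose i) * (deriv^^i) f y * (deriv^^(Suc k-i)) g y)) (at y)"
proof -
  have F: "((deriv^^i) f has_field_derivative (deriv^^Suc i) f y) (at y)" if "i \<le> k" for i
    using df[of i y] that k y by (simp add: DERIV_deriv_iff_real_differentiable)
  have G: "((deriv^^i) g has_field_derivative (deriv^^Suc i) g y) (at y)" if "i \<le> k" for i
    using dg[of i y] that k y by (simp add: DERIV_deriv_iff_real_differentiable)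
  have "((\<lambda>z. \<Sum>i=0..k. real (k choose i) * (deriv^^i) f z * (deriv^^(k-i)) g z) has_field_derivative
     (\<Sum>i=0..k. real (k choose i) * ((deriv^^Suc i) f y * (deriv^^(k-i)) g y + (deriv^^i) f y * (deriv^^Suc (k-i)) g y))) (at y)"
    apply (rule DERIV_sum)
    apply (subst mult.assoc)
    apply (rule DERIV_cmult)
    apply (rule DERIV_mult[THEN DERIV_cong])
      apply (rule F, simp)
     apply (rule G, simp)
    by simp
  then have "((\<lambda>z. \<Sum>i=0..k. real (k choose i) * (deriv^^i) f z * (deriv^^(k-i)) g z) has_field_derivative
     (\<Sum>i=0..Suc k. real (Suc k choose i) * (deriv^^i) f y * (deriv^^(Suc k-i)) g y)) (at y)"
    using leibniz_sum[of k "\<lambda>i. (deriv^^i) f y" "\<lambda>i. (deriv^^i) g y"] by simp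
  then show ?thesis
    by (rule has_field_derivative_transform_within_open[OF _ T y]) (simp add: IH)
qed

lemma leibniz:
  fixes f g :: "real \<Rightarrow> real"
  assumes T: "open T" and df: "\<And>k y. k < m \<Longrightarrow> y \<in> T \<Longrightarrow> (deriv^^k) f differentiable (at y)"
    and dg: "\<And>k y. k < m \<Longrightarrow> y \<in> T \<Longrightarrow> (deriv^^k) g differentiable (at y)"
  shows "k \<le> m \<Longrightarrow> y \<in> T \<Longrightarrow> (deriv ^^ k) (\<lambda>w. f w * g w) y =
       (\<Sum>i=0..k. real (k choose i) * (deriv^^i) f y * (deriv^^(k-i)) g y)"
proof (induction k arbitrary: y)
  case 0
  then show ?case by simp
next
  case (Suc k)
  have "((deriv ^^ k) (\<lambda>w. f w * g w) has_field_derivative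
       (\<Sum>i=0..Suc k. real (Suc k choose i) * (deriv^^i) f y * (deriv^^(Suc k-i)) g y)) (at y)"
  proof (rule leibniz_step[OF T df dg])
    show "k < m" using Suc.prems by simp
    show "y \<in> T" using Suc.prems by simp
    show "\<And>z. z \<in> T \<Longrightarrow> (deriv ^^ k) (\<lambda>w. f w * g w) z =
       (\<Sum>i=0..k. real (k choose i) * (deriv^^i) f z * (deriv^^(k-i)) g z)"
      using Suc by simp
  qed
  then show ?case by (simp add: DERIV_imp_deriv)
qed

lemma leibniz_diff:
  fixes f g :: "real \<Rightarrow> real"
  assumes T: "open T" and df: "\<And>k y. k < m \<Longrightarrow> y \<in> T \<Longrightarrow> (deriv^^k) f differentiable (at y)"
    and dg: "\<And>k y. k < m \<Longrightarrow> y \<in> T \<Longrightarrow> (deriv^^k) g differentiable (at y)"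
    and "k < m" "y \<in> T"
  shows "(deriv ^^ k) (\<lambda>w. f w * g w) differentiable (at y)"
proof -
  have "((deriv ^^ k) (\<lambda>w. f w * g w) has_field_derivative
       (\<Sum>i=0..Suc k. real (Suc k choose i) * (deriv^^i) f y * (deriv^^(Suc k-i)) g y)) (at y)"
  proof (rule leibniz_step[OF T df dg assms(4,5)])
    show "\<And>z. z \<in> T \<Longrightarrow> (deriv ^^ k) (\<lambda>w. f w * g w) z =
       (\<Sum>i=0..k. real (k choose i) * (deriv^^i) f z * (deriv^^(k-i)) g z)"
      using leibniz[OF T df dg, of k] assms(4) by simp
  qed
  then show ?thesis by (auto simp: real_differentiable_def)
qed

lemma diff_transform_open:
  fixes f g :: "real \<Rightarrow> real"
  assumes "open T" "y \<in> T" "\<And>z. z \<in> T \<Longrightarrow> f z = g z" "f differentiable (at y)"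
  shows "g differentiable (at y)"
  using assms has_field_derivative_transform_within_open[of f _ y T g]
  by (auto simp: real_differentiable_def)

lemma higher_deriv_const_on:
  fixes h :: "real \<Rightarrow> real"
  assumes T: "open T" and h: "\<And>z. z \<in> T \<Longrightarrow> h z = c"
  shows "y \<in> T \<Longrightarrow> (deriv ^^ Suc k) h y = 0"
proof (induction k arbitrary: y)
  case 0
  have "((\<lambda>_. c) has_field_derivative 0) (at y)" by simp
  then have "(h has_field_derivative 0) (at y)"
    by (rule has_field_derivative_transform_within_open[OF _ T 0]) (simp add: h)
  then show ?case by (simp add: DERIV_imp_deriv)
next
  case (Suc k)
  have "((\<lambda>_. 0) has_field_derivative 0) (at y)" by simp
  then have "((deriv ^^ Suc k) h has_field_derivative 0) (at y)"
    by (rule has_field_derivative_transform_within_open[OF _ T Suc.prems]) (use Suc.IH in simp)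
  then show ?case by (metis DERIV_imp_deriv comp_apply funpow.simps(2))
qed

lemma inv_rec:
  fixes v :: "real \<Rightarrow> real"
  assumes T: "open T" and nz: "\<And>y. y \<in> T \<Longrightarrow> v y \<noteq> 0"
    and dv: "\<And>k y. k < m \<Longrightarrow> y \<in> T \<Longrightarrow> (deriv^^k) v differentiable (at y)"
    and dw: "\<And>k y. k < m \<Longrightarrow> y \<in> T \<Longrightarrow> (deriv^^k) (\<lambda>t. 1 / v t) differentiable (at y)"
    and k: "1 \<le> k" "k \<le> m" and y: "y \<in> T"
  shows "(\<Sum>i=0..k. real (k choose i) * (deriv^^i) v y * (deriv^^(k-i)) (\<lambda>t. 1 / v t) y) = 0"
proof -
  obtain k' where k': "k = Suc k'" using k by (cases k) auto
  have "(deriv ^^ k) (\<lambda>w. v w * (1 / v w)) y = 0"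
    unfolding k' by (rule higher_deriv_const_on[OF T, of _ 1]) (use nz y in auto)
  then show ?thesis using leibniz[OF T dv dw k(2) y] by simp
qed

lemma inv_smooth:
  fixes v :: "real \<Rightarrow> real"
  assumes T: "open T" and nz: "\<And>y. y \<in> T \<Longrightarrow> v y \<noteq> 0"
    and dv: "\<And>k y. k < m \<Longrightarrow> y \<in> T \<Longrightarrow> (deriv^^k) v differentiable (at y)"
  shows "j \<le> m \<Longrightarrow> k < j \<Longrightarrow> y \<in> T \<Longrightarrow> (deriv^^k) (\<lambda>t. 1 / v t) differentiable (at y)"
proof (induction j arbitrary: k y)
  case 0
  then show ?case by simp
next
  case (Suc j)
  show ?case
  proof (cases "k < j")
    case True
    then show ?thesis using Suc by simp
  next
    case False
    then have kj: "k = j" using Suc by simp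
    show ?thesis
    proof (cases "j = 0")
      case True
      have "v differentiable (at y)" using dv[of 0 y] Suc by simp
      then show ?thesis using kj True nz[OF Suc.prems(3)] by simp
    next
      case False
      have dv': "\<And>k y. k < j \<Longrightarrow> y \<in> T \<Longrightarrow> (deriv^^k) v differentiable (at y)"
        using dv Suc.prems by simp
      have dw': "\<And>k y. k < j \<Longrightarrow> y \<in> T \<Longrightarrow> (deriv^^k) (\<lambda>t. 1 / v t) differentiable (at y)"
        using Suc by simp
      have eq: "(deriv^^j) (\<lambda>t. 1 / v t) z =
         - (\<Sum>i=1..j. real (j choose i) * (deriv^^i) v z * (deriv^^(j-i)) (\<lambda>t. 1 / v t) z) / v z"
        if z: "z \<in> T" for z
      proof -
        have "(\<Sum>i=0..j. real (j choose i) * (deriv^^i) v z * (deriv^^(j-i)) (\<lambda>t. 1 / v t) z) = 0"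
          by (rule inv_rec[OF T nz dv' dw']) (use False z in auto)
        moreover have "(\<Sum>i=0..j. real (j choose i) * (deriv^^i) v z * (deriv^^(j-i)) (\<lambda>t. 1 / v t) z)
          = v z * (deriv^^j) (\<lambda>t. 1 / v t) z + (\<Sum>i=1..j. real (j choose i) * (deriv^^i) v z * (deriv^^(j-i)) (\<lambda>t. 1 / v t) z)"
          by (simp add: sum.atLeast_Suc_atMost)
        ultimately show ?thesis using nz[OF z] by (simp add: field_simps)
      qed
      have "(\<lambda>z. - (\<Sum>i=1..j. real (j choose i) * (deriv^^i) v z * (deriv^^(j-i)) (\<lambda>t. 1 / v t) z) / v z)
          differentiable (at y)"
      proof (intro differentiable_divide differentiable_minus differentiable_sum ballI differentiable_mult differentiable_const)
        show "finite {1..j}" by simp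
        show "(deriv ^^ i) v differentiable at y" if "i \<in> {1..j}" for i
          using dv[of i y] that Suc.prems by simp
        show "(deriv ^^ (j - i)) (\<lambda>t. 1 / v t) differentiable at y" if "i \<in> {1..j}" for i
          using dw'[of "j-i" y] that Suc.prems by simp
        show "v differentiable at y" using dv[of 0 y] Suc.prems by simp
        show "v y \<noteq> 0" using nz Suc.prems by simp
      qed
      then show ?thesis
        using diff_transform_open[OF T Suc.prems(3), of _ "(deriv^^j) (\<lambda>t. 1 / v t)"] eq kj by simp
    qed
  qed
qed


definition comps :: "nat \<Rightarrow> nat list set" where
  "comps l = {cs. set cs \<subseteq> {1..l} \<and> sum_list cs = l}"

definition cterm :: "(nat \<Rightarrow> real) \<Rightarrow> nat list \<Rightarrow> real" where
  "cterm a cs = (-1) ^ length cs / a 0 ^ (length cs + 1) * prod_list (map a cs)"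

definition Rs :: "(nat \<Rightarrow> real) \<Rightarrow> nat \<Rightarrow> real" where
  "Rs a l = (\<Sum>cs\<in>comps l. cterm a cs)"

lemma length_le_sum_list: "set cs \<subseteq> {1..} \<Longrightarrow> length cs \<le> sum_list (cs::nat list)"
  by (induction cs) auto

lemma finite_comps: "finite (comps l)"
proof (rule finite_subset)
  show "comps l \<subseteq> {xs. set xs \<subseteq> {1..l} \<and> length xs \<le> l}"
    unfolding comps_def using length_le_sum_list by fastforce
  show "finite {xs. set xs \<subseteq> {1..l} \<and> length xs \<le> l}"
    by (rule finite_lists_length_le) simp
qed

lemma comps_0: "comps 0 = {[]}"
  unfolding comps_def by auto

lemma comps_pos:
  assumes "l \<ge> 1"
  shows "comps l = (\<Union>j\<in>{1..l}. (#) j ` comps (l - j))"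
proof
  show "comps l \<subseteq> (\<Union>j\<in>{1..l}. (#) j ` comps (l - j))"
  proof
    fix cs assume cs: "cs \<in> comps l"
    then obtain j cs' where c: "cs = j # cs'" using assms unfolding comps_def by (cases cs) auto
    have j: "j \<in> {1..l}" using cs c unfolding comps_def by auto
    have s: "sum_list cs' = l - j" using cs c unfolding comps_def by auto
    have "set cs' \<subseteq> {1..l-j}"
    proof
      fix x assume "x \<in> set cs'"
      then have "x \<le> sum_list cs'" "x \<ge> 1" using member_le_sum_list[of x cs'] cs c
        unfolding comps_def by auto
      then show "x \<in> {1..l-j}" using s by auto
    qed
    then have "cs' \<in> comps (l - j)" using s unfolding comps_def by auto
    then show "cs \<in> (\<Union>j\<in>{1..l}. (#) j ` comps (l - j))" using j c by auto
  qed
  show "(\<Union>j\<in>{1..l}. (#) j ` comps (l - j)) \<subseteq> comps l"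
    unfolding comps_def by (force simp: subset_iff)
qed

lemma Rs_0: "Rs a 0 = 1 / a 0"
  unfolding Rs_def comps_0 cterm_def by simp

lemma Rs_rec:
  assumes "l \<ge> 1" "a 0 \<noteq> 0"
  shows "a 0 * Rs a l = - (\<Sum>j=1..l. a j * Rs a (l - j))"
proof -
  have "Rs a l = (\<Sum>j\<in>{1..l}. sum (cterm a) ((#) j ` comps (l - j)))"
    unfolding Rs_def comps_pos[OF assms(1)]
    by (rule sum.UNION_disjoint) (auto simp: finite_comps)
  also have "\<dots> = (\<Sum>j\<in>{1..l}. \<Sum>cs\<in>comps (l - j). cterm a (j # cs))"
  proof (rule sum.cong[OF refl])
    fix j show "sum (cterm a) ((#) j ` comps (l - j)) = (\<Sum>cs\<in>comps (l - j). cterm a (j # cs))"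
      by (subst sum.reindex) (auto simp: inj_on_def)
  qed
  also have "\<dots> = (\<Sum>j\<in>{1..l}. \<Sum>cs\<in>comps (l - j). - (a j / a 0) * cterm a cs)"
    unfolding cterm_def using assms(2) by (intro sum.cong refl) (simp add: field_simps)
  also have "\<dots> = - (\<Sum>j=1..l. a j * Rs a (l - j)) / a 0"
    unfolding Rs_def by (simp add: sum_distrib_left sum_divide_distrib sum_negf)
  finally show ?thesis using assms(2) by (simp add: field_simps)
qed

lemma prod_list_count:
  fixes a :: "nat \<Rightarrow> real"
  assumes "set cs \<subseteq> A" "finite A"
  shows "prod_list (map a cs) = (\<Prod>i\<in>A. a i ^ count_list cs i)"
  using assms(1)
proof (induction cs)
  case Nil
  then show ?case by simp
next
  case (Cons c cs)
  have c: "c \<in> A" using Cons by simp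
  have "(\<Prod>i\<in>A. a i ^ count_list (c # cs) i) = a c ^ count_list (c # cs) c * (\<Prod>i\<in>A-{c}. a i ^ count_list (c # cs) i)"
    using prod.remove[OF assms(2) c] by blast
  also have "(\<Prod>i\<in>A-{c}. a i ^ count_list (c # cs) i) = (\<Prod>i\<in>A-{c}. a i ^ count_list cs i)"
    by (intro prod.cong) auto
  also have "a c ^ count_list (c # cs) c = a c * a c ^ count_list cs c" by simp
  also have "(\<Prod>i\<in>A. a i ^ count_list cs i) = a c ^ count_list cs c * (\<Prod>i\<in>A-{c}. a i ^ count_list cs i)"
    using prod.remove[OF assms(2) c] by blast
  ultimately show ?case using Cons by simp
qed

lemma length_count:
  assumes "set cs \<subseteq> A" "finite A"
  shows "length cs = (\<Sum>i\<in>A. count_list cs i)"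
  using sum_list_map_eq_sum_count2[OF assms, of "\<lambda>_. 1::nat"]
  by (simp add: sum_list_triv)

lemma sum_count:
  assumes "set cs \<subseteq> A" "finite A"
  shows "sum_list cs = (\<Sum>i\<in>A. i * count_list cs i)"
  using sum_list_map_eq_sum_count2[OF assms, of "\<lambda>x. x::nat"]
  by (simp add: mult.commute)

lemma count_in_partitions:
  assumes "cs \<in> comps l"
  shows "count_list cs \<in> partitions_tuples l"
proof -
  have s: "set cs \<subseteq> {1..l}" "sum_list cs = l" using assms unfolding comps_def by auto
  have "\<forall>i. i \<notin> {1..l} \<longrightarrow> count_list cs i = 0" using s by (auto simp: count_list_0_iff)
  moreover have "(\<Sum>i=1..l. i * count_list cs i) = l" using sum_count[OF s(1)] s(2) by simp
  ultimately show ?thesis unfolding partitions_tuples_def by auto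
qed

lemma fin_supp: "y \<in> partitions_tuples l \<Longrightarrow> finite {x. y x > 0}"
  by (rule finite_subset[of _ "{1..l}"]) (auto simp: partitions_tuples_def)

lemma count_imp_comps:
  assumes "y \<in> partitions_tuples l" "count_list cs = y"
  shows "cs \<in> comps l"
proof -
  have s: "set cs \<subseteq> {1..l}"
  proof
    fix i assume "i \<in> set cs"
    then have "y i \<noteq> 0" using assms(2) count_list_0_iff by metis
    then show "i \<in> {1..l}" using assms(1) unfolding partitions_tuples_def by auto
  qed
  have "sum_list cs = l" using sum_count[OF s] assms unfolding partitions_tuples_def by simp
  then show ?thesis using s unfolding comps_def by auto
qed

lemma fiber_eq:
  assumes "y \<in> partitions_tuples l"
  shows "{cs. cs \<in> comps l \<and> count_list cs = y} = permutations_of_multiset (Abs_multiset y)"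
proof -
  have "mset cs = Abs_multiset y \<longleftrightarrow> count_list cs = y" for cs
    by (simp add: multiset_eq_iff count_Abs_multiset[OF fin_supp[OF assms]] count_mset fun_eq_iff)
  then show ?thesis using count_imp_comps[OF assms]
    unfolding permutations_of_multiset_def by auto
qed

lemma surj_count:
  assumes "y \<in> partitions_tuples l"
  obtains cs where "mset cs = Abs_multiset y" "count_list cs = y" "cs \<in> comps l"
proof -
  obtain cs where cs: "mset cs = Abs_multiset y" using ex_mset by blast
  then have "count_list cs = y"
    by (metis count_Abs_multiset[OF fin_supp[OF assms]] count_mset ext)
  then show ?thesis using cs that count_imp_comps[OF assms] by blast
qed

lemma finite_partitions: "finite (partitions_tuples l)"
proof (rule finite_subset)
  show "partitions_tuples l \<subseteq> count_list ` comps l"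
    using surj_count by (metis image_eqI subsetI)
qed (simp add: finite_comps)

lemma card_fiber:
  assumes "y \<in> partitions_tuples l"
  shows "real (card (permutations_of_multiset (Abs_multiset y))) = multinomial_coeff (\<Sum>i=1..l. y i) y l"
proof -
  obtain cs where cs: "mset cs = Abs_multiset y" "count_list cs = y" "cs \<in> comps l"
    using surj_count[OF assms] .
  have s: "set cs \<subseteq> {1..l}" using cs unfolding comps_def by auto
  have "card (permutations_of_multiset (mset cs)) * (\<Prod>x\<in>set_mset (mset cs). fact (count (mset cs) x)) = fact (size (mset cs))"
    by (rule card_permutations_of_multiset_aux)
  moreover have "(\<Prod>x\<in>set_mset (mset cs). fact (count (mset cs) x)) = (\<Prod>i=1..l. fact (y i) :: nat)"
  proof -
    have "(\<Prod>x\<in>set_mset (mset cs). fact (count (mset cs) x)) = (\<Prod>x\<in>set cs. fact (y x) :: nat)"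
      using cs(2) by (simp add: count_mset)
    also have "\<dots> = (\<Prod>i=1..l. fact (y i))"
      using s cs(2) by (intro prod.mono_neutral_left) (auto simp: count_list_0_iff)
    finally show ?thesis .
  qed
  moreover have "size (mset cs) = (\<Sum>i=1..l. y i)" using length_count[OF s] cs(2) by simp
  ultimately have "card (permutations_of_multiset (mset cs)) * (\<Prod>i=1..l. fact (y i) :: nat) = fact (\<Sum>i=1..l. y i)"
    by simp
  then have "real (card (permutations_of_multiset (mset cs))) * (\<Prod>i=1..l. fact (y i) :: real) = fact (\<Sum>i=1..l. y i)"
    by (metis (mono_tags, lifting) of_nat_fact of_nat_mult of_nat_prod prod.cong)
  moreover have "(\<Prod>i=1..l. fact (y i) :: real) \<noteq> 0" by simp
  ultimately show ?thesis unfolding multinomial_coeff_def cs(1)[symmetric]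
    by (simp add: field_simps)
qed

lemma Q_eq_Rs:
  fixes a :: "nat \<Rightarrow> real"
  shows "(\<Sum>y\<in>partitions_tuples l.
         multinomial_coeff (\<Sum>i=1..l. y i) y l *
         (-1) ^ (\<Sum>i=1..l. y i) / a 0 ^ ((\<Sum>i=1..l. y i) + 1) *
         (\<Prod>i=1..l. a i ^ y i)) = Rs a l"
proof -
  let ?t = "\<lambda>y. (-1) ^ (\<Sum>i=1..l. y i) / a 0 ^ ((\<Sum>i=1..l. y i) + 1) * (\<Prod>i=1..l. a i ^ y i)"
  have ct: "cterm a cs = ?t (count_list cs)" if "cs \<in> comps l" for cs
  proof -
    have s: "set cs \<subseteq> {1..l}" using that unfolding comps_def by auto
    show ?thesis unfolding cterm_def using length_count[OF s] prod_list_count[OF s] by simp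
  qed
  have "Rs a l = (\<Sum>y\<in>partitions_tuples l. sum (cterm a) {cs. cs \<in> comps l \<and> count_list cs = y})"
    unfolding Rs_def
    by (rule sum.group[symmetric]) (auto simp: finite_comps finite_partitions count_in_partitions)
  also have "\<dots> = (\<Sum>y\<in>partitions_tuples l. sum (\<lambda>_. ?t y) {cs. cs \<in> comps l \<and> count_list cs = y})"
    by (intro sum.cong refl) (auto simp: ct)
  also have "\<dots> = (\<Sum>y\<in>partitions_tuples l. multinomial_coeff (\<Sum>i=1..l. y i) y l * ?t y)"
    by (intro sum.cong refl) (simp add: fiber_eq card_fiber)
  finally show ?thesis by (simp add: mult.assoc)
qed


lemma q_eq_Rs:
  fixes v :: "real \<Rightarrow> real"
  assumes T: "open T" and nz: "\<And>y. y \<in> T \<Longrightarrow> v y \<noteq> 0"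
    and dv: "\<And>k y. k < n \<Longrightarrow> y \<in> T \<Longrightarrow> (deriv^^k) v differentiable (at y)"
    and x: "x \<in> T"
  shows "l \<le> n \<Longrightarrow> (deriv^^l) (\<lambda>t. 1 / v t) x / fact l = Rs (\<lambda>i. (deriv^^i) v x / fact i) l"
proof (induction l rule: less_induct)
  case (less l)
  define a where "a = (\<lambda>i. (deriv^^i) v x / fact i)"
  define q where "q = (\<lambda>i. (deriv^^i) (\<lambda>t. 1 / v t) x / fact i :: real)"
  have a0: "a 0 = v x" "a 0 \<noteq> 0" using nz[OF x] by (auto simp: a_def)
  show ?case
  proof (cases "l = 0")
    case True
    then show ?thesis by (simp add: Rs_0)
  next
    case False
    have dw: "\<And>k y. k < n \<Longrightarrow> y \<in> T \<Longrightarrow> (deriv^^k) (\<lambda>t. 1 / v t) differentiable (at y)"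
      using inv_smooth[OF T nz dv, of n] by blast
    have "(\<Sum>i=0..l. real (l choose i) * (deriv^^i) v x * (deriv^^(l-i)) (\<lambda>t. 1 / v t) x) = 0"
      by (rule inv_rec[OF T nz dv dw]) (use False less.prems x in auto)
    moreover have "(\<Sum>i=0..l. real (l choose i) * (deriv^^i) v x * (deriv^^(l-i)) (\<lambda>t. 1 / v t) x)
       = fact l * (\<Sum>i=0..l. a i * q (l - i))"
      unfolding sum_distrib_left
    proof (rule sum.cong[OF refl])
      fix i assume i: "i \<in> {0..l}"
      then show "real (l choose i) * (deriv^^i) v x * (deriv^^(l-i)) (\<lambda>t. 1 / v t) x = fact l * (a i * q (l - i))"
        by (simp add: binomial_fact a_def q_def field_simps)
    qed
    ultimately have "(\<Sum>i=0..l. a i * q (l - i)) = 0" by simp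
    moreover have "(\<Sum>i=0..l. a i * q (l - i)) = a 0 * q l + (\<Sum>i=1..l. a i * q (l - i))"
      by (simp add: sum.atLeast_Suc_atMost)
    moreover have "(\<Sum>i=1..l. a i * q (l - i)) = (\<Sum>i=1..l. a i * Rs a (l - i))"
      using less False by (intro sum.cong refl) (auto simp: q_def a_def)
    ultimately have "a 0 * q l = a 0 * Rs a l"
      using Rs_rec[of l a] False a0 by simp
    then have "q l = Rs a l" using a0(2) by (metis mult_left_cancel)
    then show ?thesis unfolding q_def a_def .
  qed
qed

theorem theorem3p1:
  fixes u v :: "real \<Rightarrow> real" and n :: nat and S :: "real set" and x :: real
  assumes "open S"
    and "\<And>k y. k < n \<Longrightarrow> y \<in> S \<Longrightarrow> (deriv ^^ k) u differentiable (at y)"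
    and "\<And>k y. k < n \<Longrightarrow> y \<in> S \<Longrightarrow> (deriv ^^ k) v differentiable (at y)"
    and "x \<in> S" and "v x \<noteq> 0"
  shows "(deriv ^^ n) (\<lambda>t. u t / v t) x =
    fact n * (\<Sum>l=0..n. (deriv ^^ (n - l)) u x / fact (n - l) *
      (\<Sum>y\<in>partitions_tuples l.
         multinomial_coeff (\<Sum>i=1..l. y i) y l *
         (-1) ^ (\<Sum>i=1..l. y i) / v x ^ ((\<Sum>i=1..l. y i) + 1) *
         (\<Prod>i=1..l. ((deriv ^^ i) v x / fact i) ^ y i)))"
proof -
  define a where "a = (\<lambda>i. (deriv^^i) v x / fact i)"
  have Q: "(\<Sum>y\<in>partitions_tuples l.
         multinomial_coeff (\<Sum>i=1..l. y i) y l *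
         (-1) ^ (\<Sum>i=1..l. y i) / v x ^ ((\<Sum>i=1..l. y i) + 1) *
         (\<Prod>i=1..l. ((deriv ^^ i) v x / fact i) ^ y i)) = Rs a l" for l
    using Q_eq_Rs[of l a] by (simp add: a_def)
  show ?thesis
  proof (cases "n = 0")
    case True
    then show ?thesis using Q[of 0] by (simp add: Rs_0 a_def)
  next
    case False
    define T where "T = S \<inter> v -` (-{0})"
    have cont: "continuous_on S v"
      using assms(3)[of 0] False
      by (intro continuous_at_imp_continuous_on ballI differentiable_imp_continuous_within) auto
    have T: "open T" unfolding T_def by (rule continuous_open_preimage[OF cont assms(1)]) auto
    have xT: "x \<in> T" using assms(4,5) by (simp add: T_def)
    have nz: "\<And>y. y \<in> T \<Longrightarrow> v y \<noteq> 0" by (simp add: T_def)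
    have du: "\<And>k y. k < n \<Longrightarrow> y \<in> T \<Longrightarrow> (deriv^^k) u differentiable (at y)"
      using assms(2) by (simp add: T_def)
    have dv: "\<And>k y. k < n \<Longrightarrow> y \<in> T \<Longrightarrow> (deriv^^k) v differentiable (at y)"
      using assms(3) by (simp add: T_def)
    have dw: "\<And>k y. k < n \<Longrightarrow> y \<in> T \<Longrightarrow> (deriv^^k) (\<lambda>t. 1 / v t) differentiable (at y)"
      using inv_smooth[OF T nz dv, of n] by blast
    have fe: "(\<lambda>t. u t / v t) = (\<lambda>t. 1 / v t * u t)" by (rule ext) simp
    have "(deriv ^^ n) (\<lambda>t. u t / v t) x =
       (\<Sum>i=0..n. real (n choose i) * (deriv^^i) (\<lambda>t. 1 / v t) x * (deriv^^(n-i)) u x)"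
      unfolding fe by (rule leibniz[OF T dw du order.refl xT])
    also have "\<dots> = fact n * (\<Sum>l=0..n. (deriv ^^ (n - l)) u x / fact (n - l) * Rs a l)"
      unfolding sum_distrib_left
    proof (rule sum.cong[OF refl])
      fix l assume l: "l \<in> {0..n}"
      have "Rs a l = (deriv^^l) (\<lambda>t. 1 / v t) x / fact l"
        using q_eq_Rs[OF T nz dv xT, of l] l by (simp add: a_def)
      then show "real (n choose l) * (deriv^^l) (\<lambda>t. 1 / v t) x * (deriv^^(n-l)) u x =
         fact n * ((deriv ^^ (n - l)) u x / fact (n - l) * Rs a l)"
        using l by (simp add: binomial_fact field_simps)
    qed
    finally show ?thesis by (simp only: Q)
  qed
qed

end
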